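(* Let $N\ge1$ and suppose the parameter space $\Theta$ of the correlated Bernoulli random graph model is nondegenerate and satisfies $\Theta\subseteq\mathcal{R}^o$ (all $\varrho_i=0$). Then the statistic $$\mathfrak{d}_{X,Y}\left(1-\mathfrak{d}_{X,Y}\right)-\frac{1}{2N}\left(1-\frac{1}{2N}\right)\Delta$$ is the UMVU estimator of $\sigma^2=\frac1N\sum_{i=1}^N(p_i-\mu)^2$, where $\mu=\frac1N\sum_{i=1}^Np_i$.
   Context: Correlated Bernoulli random graph model: fix a positive integer $N$ and let $\mathcal{R}=\{(p_1,\dots,p_N,\varrho_1,\dots,\varrho_N): p_i,\varrho_i\in[0,1]\}$; a parameter space is any $\Theta\subseteq\mathcal{R}$. For $\theta\in\Theta$, the pairs $(X_i,Y_i)$, $i=1,\dots,N$, of $\{0,1\}$-valued random variables are independent, $X_i,Y_i$ are marginally Bernoulli$(p_i)$ with Pearson correlation $\varrho_i$. Sample space $\mathcal{X}=\{(x,y):x,y\in\{0,1\}^N\}$. Let $\mathcal{R}^o=\{(p_1,\dots,p_N,0,\dots,0):p_i\in\mathbb{R}\}$; $\Theta$ is nondegenerate if $\Theta\cap\mathcal{R}^o$ has an interior point relative to $\mathcal{R}^o$. Statistics: $\mathfrak{d}_X=\frac1N\sum_iX_i$, $\mathfrak{d}_Y=\frac1N\sum_iY_i$, $\mathfrak{d}_{X,Y}=\frac12(\mathfrak{d}_X+\mathfrak{d}_Y)$, and $\Delta=\sum_{i=1}^N(X_i-Y_i)^2$ (number of coordinates where $x$ and $y$ disagree). UMVU means unbiased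 (expectation equals the target for every $\theta\in\Theta$) with minimum variance among all unbiased estimators for every $\theta\in\Theta$. *)

theory Defs
  imports "HOL-Analysis.Analysis"
begin

text \<open>Parameters are pairs (p, rho) of functions nat => real; only indices i < N matter,
  and we normalise them to be 0 for i >= N. Samples are pairs (x, y) of functions
  nat => bool (x i = True meaning X_i = 1), normalised to False for i >= N.\<close>

definition param_space_R :: "nat \<Rightarrow> ((nat \<Rightarrow> real) \<times> (nat \<Rightarrow> real)) set" where
  "param_space_R N = {(p, r). (\<forall>i<N. 0 \<le> p i \<and> p i \<le> 1 \<and> 0 \<le> r i \<and> r i \<le> 1)
                              \<and> (\<forall>i\<ge>N. p i = 0 \<and> r i = 0)}"

definition param_space_Ro :: "nat \<Rightarrow> ((nat \<Rightarrow> real) \<times> (nat \<Rightarrow> real)) set" where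
  "param_space_Ro N = {(p, r). (\<forall>i. r i = 0) \<and> (\<forall>i\<ge>N. p i = 0)}"

text \<open>Theta \<inter> R^o has an interior point relative to R^o (identified with R^N via p).\<close>
definition nondegenerate :: "nat \<Rightarrow> ((nat \<Rightarrow> real) \<times> (nat \<Rightarrow> real)) set \<Rightarrow> bool" where
  "nondegenerate N \<Theta> \<longleftrightarrow>
     (\<exists>p0 e. (p0, (\<lambda>_. 0)) \<in> param_space_Ro N \<and> e > 0 \<and>
        (\<forall>p. (p, (\<lambda>_. 0)) \<in> param_space_Ro N \<and> (\<forall>i<N. \<bar>p i - p0 i\<bar> < e)
             \<longrightarrow> (p, (\<lambda>_. 0)) \<in> \<Theta>))"

definition sample_space :: "nat \<Rightarrow> ((nat \<Rightarrow> bool) \<times> (nat \<Rightarrow> bool)) set" where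
  "sample_space N = {(x, y). \<forall>i\<ge>N. x i = False \<and> y i = False}"

text \<open>Joint pmf of a pair (X,Y) of Bernoulli(p) variables with Pearson correlation r.\<close>
definition pair_pmf :: "real \<Rightarrow> real \<Rightarrow> bool \<Rightarrow> bool \<Rightarrow> real" where
  "pair_pmf p r a b =
     (if a \<and> b then p^2 + r * p * (1 - p)
      else if \<not> a \<and> \<not> b then (1 - p)^2 + r * p * (1 - p)
      else p * (1 - p) * (1 - r))"

definition model_prob ::
  "nat \<Rightarrow> ((nat \<Rightarrow> real) \<times> (nat \<Rightarrow> real)) \<Rightarrow> ((nat \<Rightarrow> bool) \<times> (nat \<Rightarrow> bool)) \<Rightarrow> real" where
  "model_prob N \<theta> s = (\<Prod>i<N. pair_pmf (fst \<theta> i) (snd \<theta> i) (fst s i) (snd s i))"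

definition expect ::
  "nat \<Rightarrow> ((nat \<Rightarrow> real) \<times> (nat \<Rightarrow> real)) \<Rightarrow> (((nat \<Rightarrow> bool) \<times> (nat \<Rightarrow> bool)) \<Rightarrow> real) \<Rightarrow> real" where
  "expect N \<theta> T = (\<Sum>s\<in>sample_space N. T s * model_prob N \<theta> s)"

definition variance_of ::
  "nat \<Rightarrow> ((nat \<Rightarrow> real) \<times> (nat \<Rightarrow> real)) \<Rightarrow> (((nat \<Rightarrow> bool) \<times> (nat \<Rightarrow> bool)) \<Rightarrow> real) \<Rightarrow> real" where
  "variance_of N \<theta> T = expect N \<theta> (\<lambda>s. (T s - expect N \<theta> T)^2)"

definition unbiased ::
  "nat \<Rightarrow> ((nat \<Rightarrow> real) \<times> (nat \<Rightarrow> real)) set \<Rightarrow> (((nat \<Rightarrow> bool) \<times> (nat \<Rightarrow> bool)) \<Rightarrow> real)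
   \<Rightarrow> (((nat \<Rightarrow> real) \<times> (nat \<Rightarrow> real)) \<Rightarrow> real) \<Rightarrow> bool" where
  "unbiased N \<Theta> T g \<longleftrightarrow> (\<forall>\<theta>\<in>\<Theta>. expect N \<theta> T = g \<theta>)"

definition UMVU ::
  "nat \<Rightarrow> ((nat \<Rightarrow> real) \<times> (nat \<Rightarrow> real)) set \<Rightarrow> (((nat \<Rightarrow> bool) \<times> (nat \<Rightarrow> bool)) \<Rightarrow> real)
   \<Rightarrow> (((nat \<Rightarrow> real) \<times> (nat \<Rightarrow> real)) \<Rightarrow> real) \<Rightarrow> bool" where
  "UMVU N \<Theta> T g \<longleftrightarrow> unbiased N \<Theta> T g \<and>
     (\<forall>T'. unbiased N \<Theta> T' g \<longrightarrow> (\<forall>\<theta>\<in>\<Theta>. variance_of N \<theta> T \<le> variance_of N \<theta> T'))"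

definition dens_X :: "nat \<Rightarrow> ((nat \<Rightarrow> bool) \<times> (nat \<Rightarrow> bool)) \<Rightarrow> real" where
  "dens_X N s = (\<Sum>i<N. of_bool (fst s i)) / real N"

definition dens_Y :: "nat \<Rightarrow> ((nat \<Rightarrow> bool) \<times> (nat \<Rightarrow> bool)) \<Rightarrow> real" where
  "dens_Y N s = (\<Sum>i<N. of_bool (snd s i)) / real N"

definition dens_XY :: "nat \<Rightarrow> ((nat \<Rightarrow> bool) \<times> (nat \<Rightarrow> bool)) \<Rightarrow> real" where
  "dens_XY N s = (dens_X N s + dens_Y N s) / 2"

definition Delta :: "nat \<Rightarrow> ((nat \<Rightarrow> bool) \<times> (nat \<Rightarrow> bool)) \<Rightarrow> real" where
  "Delta N s = (\<Sum>i<N. (of_bool (fst s i) - of_bool (snd s i))^2)"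

definition mu_p :: "nat \<Rightarrow> (nat \<Rightarrow> real) \<Rightarrow> real" where
  "mu_p N p = (\<Sum>i<N. p i) / real N"

definition sigma2_p :: "nat \<Rightarrow> (nat \<Rightarrow> real) \<Rightarrow> real" where
  "sigma2_p N p = (\<Sum>i<N. (p i - mu_p N p)^2) / real N"

end

theory Submission
  imports Defs
begin

definition upd :: "nat \<Rightarrow> ((nat \<Rightarrow> bool) \<times> (nat \<Rightarrow> bool)) \<Rightarrow> bool \<Rightarrow> bool \<Rightarrow> ((nat \<Rightarrow> bool) \<times> (nat \<Rightarrow> bool))" where
  "upd n s a b = ((fst s)(n := a), (snd s)(n := b))"

lemma S_zero: "sample_space 0 = {(\<lambda>_. False, \<lambda>_. False)}"
  unfolding sample_space_def by (auto simp: fun_eq_iff)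

lemma S_Suc: "sample_space (Suc n) = (\<lambda>(s,ab). upd n s (fst ab) (snd ab)) ` (sample_space n \<times> UNIV)"
proof (rule set_eqI, rule iffI)
  fix t assume t: "t \<in> sample_space (Suc n)"
  obtain x y where xy: "t = (x, y)" by (cases t)
  let ?s = "(x(n := False), y(n := False))"
  have "?s \<in> sample_space n" using t xy unfolding sample_space_def by auto
  moreover have "t = upd n ?s (x n) (y n)" using xy unfolding upd_def by auto
  ultimately show "t \<in> (\<lambda>(s,ab). upd n s (fst ab) (snd ab)) ` (sample_space n \<times> UNIV)"
    by (intro image_eqI[where x="(?s, (x n, y n))"]) auto
next
  fix t assume "t \<in> (\<lambda>(s,ab). upd n s (fst ab) (snd ab)) ` (sample_space n \<times> UNIV)"
  then show "t \<in> sample_space (Suc n)" unfolding sample_space_def upd_def by auto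
qed

lemma inj_upd: "inj_on (\<lambda>(s,ab). upd n s (fst ab) (snd ab)) (sample_space n \<times> UNIV)"
proof (rule inj_on_inverseI[where g="\<lambda>t. (((fst t)(n := False), (snd t)(n := False)), (fst t n, snd t n))"])
  fix z assume z: "z \<in> sample_space n \<times> (UNIV :: (bool \<times> bool) set)"
  obtain x y a b where zz: "z = ((x, y), (a, b))" by (cases z) auto
  have "x n = False" "y n = False" using z zz unfolding sample_space_def by auto
  then show "(\<lambda>t. (((fst t)(n := False), (snd t)(n := False)), (fst t n, snd t n)))
        ((\<lambda>(s,ab). upd n s (fst ab) (snd ab)) z) = z"
    using zz unfolding upd_def by (auto simp: fun_eq_iff)
qed

lemma finite_S: "finite (sample_space n)"
  by (induction n) (auto simp: S_zero S_Suc)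

lemma UNIV_bb: "(UNIV :: (bool \<times> bool) set) = {(False,False),(False,True),(True,False),(True,True)}"
  by auto

lemma sum_S_Suc:
  "(\<Sum>s\<in>sample_space (Suc n). h s) =
   (\<Sum>s\<in>sample_space n. h (upd n s False False) + h (upd n s False True)
        + h (upd n s True False) + h (upd n s True True))"
proof -
  have "(\<Sum>s\<in>sample_space (Suc n). h s) = (\<Sum>sab\<in>sample_space n \<times> UNIV. h ((\<lambda>(s,ab). upd n s (fst ab) (snd ab)) sab))"
    unfolding S_Suc by (rule sum.reindex[OF inj_upd, unfolded comp_def])
  also have "\<dots> = (\<Sum>s\<in>sample_space n. \<Sum>ab\<in>UNIV. h (upd n s (fst ab) (snd ab)))"
    by (subst sum.cartesian_product) (simp add: case_prod_beta)
  also have "\<dots> = (\<Sum>s\<in>sample_space n. h (upd n s False False) + h (upd n s False True)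
        + h (upd n s True False) + h (upd n s True True))"
    by (rule sum.cong) (simp_all add: UNIV_bb add.assoc)
  finally show ?thesis .
qed

lemma mp_Suc: "model_prob (Suc n) \<theta> (upd n s a b) = model_prob n \<theta> s * pair_pmf (fst \<theta> n) (snd \<theta> n) a b"
  unfolding model_prob_def upd_def by (simp add: prod.lessThan_Suc)

lemma mp_Suc': "model_prob (Suc n) \<theta> (upd n s a b) = model_prob n \<theta> s * pair_pmf (fst \<theta> n) (snd \<theta> n) a b"
  unfolding model_prob_def upd_def by (auto simp: prod.lessThan_Suc intro!: prod.cong)

lemma mp_cong: "(\<And>i. i < n \<Longrightarrow> fst \<theta> i = fst \<theta>' i \<and> snd \<theta> i = snd \<theta>' i) \<Longrightarrow> model_prob n \<theta> s = model_prob n \<theta>' s"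
  unfolding model_prob_def by (auto intro!: prod.cong)

lemma mp_sum1: "(\<Sum>s\<in>sample_space n. model_prob n \<theta> s) = 1"
proof (induction n)
  case 0 then show ?case by (simp add: S_zero model_prob_def)
next
  case (Suc n)
  have "(\<Sum>s\<in>sample_space (Suc n). model_prob (Suc n) \<theta> s)
     = (\<Sum>s\<in>sample_space n. model_prob n \<theta> s * (pair_pmf (fst \<theta> n) (snd \<theta> n) False False
        + pair_pmf (fst \<theta> n) (snd \<theta> n) False True + pair_pmf (fst \<theta> n) (snd \<theta> n) True False
        + pair_pmf (fst \<theta> n) (snd \<theta> n) True True))"
    unfolding sum_S_Suc mp_Suc' by (simp add: algebra_simps)
  also have "\<dots> = (\<Sum>s\<in>sample_space n. model_prob n \<theta> s)"
    by (simp add: pair_pmf_def power2_eq_square algebra_simps)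
  finally show ?case using Suc by simp
qed


definition E1 :: "((nat \<Rightarrow> real) \<times> (nat \<Rightarrow> real)) \<Rightarrow> nat \<Rightarrow> (bool \<Rightarrow> bool \<Rightarrow> real) \<Rightarrow> real" where
  "E1 \<theta> k f = f False False * pair_pmf (fst \<theta> k) (snd \<theta> k) False False
     + f False True * pair_pmf (fst \<theta> k) (snd \<theta> k) False True
     + f True False * pair_pmf (fst \<theta> k) (snd \<theta> k) True False
     + f True True * pair_pmf (fst \<theta> k) (snd \<theta> k) True True"

lemma pp_sum: "pair_pmf p r False False + pair_pmf p r False True + pair_pmf p r True False + pair_pmf p r True True = 1"
  by (simp add: pair_pmf_def power2_eq_square algebra_simps)

lemma upd_other: "i \<noteq> n \<Longrightarrow> fst (upd n s a b) i = fst s i \<and> snd (upd n s a b) i = snd s i"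
  unfolding upd_def by simp

lemma upd_same: "fst (upd n s a b) n = a \<and> snd (upd n s a b) n = b"
  unfolding upd_def by simp

lemma mom1: "k < n \<Longrightarrow> (\<Sum>s\<in>sample_space n. f (fst s k) (snd s k) * model_prob n \<theta> s) = E1 \<theta> k f"
proof (induction n)
  case 0 then show ?case by simp
next
  case (Suc n)
  show ?case
  proof (cases "k < n")
    case True
    have "(\<Sum>s\<in>sample_space (Suc n). f (fst s k) (snd s k) * model_prob (Suc n) \<theta> s)
      = (\<Sum>s\<in>sample_space n. f (fst s k) (snd s k) * model_prob n \<theta> s *
          (pair_pmf (fst \<theta> n) (snd \<theta> n) False False + pair_pmf (fst \<theta> n) (snd \<theta> n) False True
          + pair_pmf (fst \<theta> n) (snd \<theta> n) True False + pair_pmf (fst \<theta> n) (snd \<theta> n) True True))"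
      unfolding sum_S_Suc mp_Suc' using True by (simp add: upd_other algebra_simps)
    then show ?thesis using Suc True by (simp add: pp_sum)
  next
    case False
    then have kn: "k = n" using Suc by simp
    have "(\<Sum>s\<in>sample_space (Suc n). f (fst s k) (snd s k) * model_prob (Suc n) \<theta> s)
      = (\<Sum>s\<in>sample_space n. model_prob n \<theta> s * E1 \<theta> k f)"
      unfolding sum_S_Suc mp_Suc' kn by (simp add: upd_same E1_def algebra_simps)
    also have "\<dots> = E1 \<theta> k f" by (simp add: sum_distrib_right[symmetric] mp_sum1)
    finally show ?thesis .
  qed
qed

lemma mom2: "j < n \<Longrightarrow> k < n \<Longrightarrow> j \<noteq> k \<Longrightarrow>
  (\<Sum>s\<in>sample_space n. f (fst s j) (snd s j) * g (fst s k) (snd s k) * model_prob n \<theta> s) = E1 \<theta> j f * E1 \<theta> k g"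
proof (induction n)
  case 0 then show ?case by simp
next
  case (Suc n)
  show ?case
  proof (cases "j < n \<and> k < n")
    case True
    have "(\<Sum>s\<in>sample_space (Suc n). f (fst s j) (snd s j) * g (fst s k) (snd s k) * model_prob (Suc n) \<theta> s)
      = (\<Sum>s\<in>sample_space n. f (fst s j) (snd s j) * g (fst s k) (snd s k) * model_prob n \<theta> s *
          (pair_pmf (fst \<theta> n) (snd \<theta> n) False False + pair_pmf (fst \<theta> n) (snd \<theta> n) False True
          + pair_pmf (fst \<theta> n) (snd \<theta> n) True False + pair_pmf (fst \<theta> n) (snd \<theta> n) True True))"
      unfolding sum_S_Suc mp_Suc' using True by (simp add: upd_other algebra_simps)
    then show ?thesis using Suc True by (simp add: pp_sum)
  next
    case False
    show ?thesis
    proof (cases "j = n")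
      case True
      then have kn: "k < n" using Suc by auto
      have "(\<Sum>s\<in>sample_space (Suc n). f (fst s j) (snd s j) * g (fst s k) (snd s k) * model_prob (Suc n) \<theta> s)
        = (\<Sum>s\<in>sample_space n. g (fst s k) (snd s k) * model_prob n \<theta> s * E1 \<theta> j f)"
        unfolding sum_S_Suc mp_Suc' using True kn by (simp add: upd_same upd_other E1_def algebra_simps)
      also have "\<dots> = E1 \<theta> j f * E1 \<theta> k g" by (simp add: sum_distrib_right[symmetric] mom1[OF kn])
      finally show ?thesis .
    next
      case False
      then have jn: "j < n" and kn: "k = n" using Suc \<open>\<not> (j < n \<and> k < n)\<close> by auto
      have "(\<Sum>s\<in>sample_space (Suc n). f (fst s j) (snd s j) * g (fst s k) (snd s k) * model_prob (Suc n) \<theta> s)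
        = (\<Sum>s\<in>sample_space n. f (fst s j) (snd s j) * model_prob n \<theta> s * E1 \<theta> k g)"
        unfolding sum_S_Suc mp_Suc' using jn kn by (simp add: upd_same upd_other E1_def algebra_simps)
      also have "\<dots> = E1 \<theta> j f * E1 \<theta> k g" by (simp add: sum_distrib_right[symmetric] mom1[OF jn])
      finally show ?thesis .
    qed
  qed
qed


definition Zr :: "nat \<Rightarrow> ((nat \<Rightarrow> bool) \<times> (nat \<Rightarrow> bool)) \<Rightarrow> real" where
  "Zr k s = of_bool (fst s k) + of_bool (snd s k)"

definition Wr :: "nat \<Rightarrow> ((nat \<Rightarrow> bool) \<times> (nat \<Rightarrow> bool)) \<Rightarrow> real" where
  "Wr k s = (of_bool (fst s k) - of_bool (snd s k))^2"

lemma lin_sum: fixes w :: "'a \<Rightarrow> real" shows "(\<Sum>s\<in>A. (\<Sum>i\<in>I. f i s) * w s) = (\<Sum>i\<in>I. \<Sum>s\<in>A. f i s * w s)"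
proof -
  have "(\<Sum>s\<in>A. (\<Sum>i\<in>I. f i s) * w s) = (\<Sum>s\<in>A. \<Sum>i\<in>I. f i s * w s)"
    by (simp add: sum_distrib_right)
  also have "\<dots> = (\<Sum>i\<in>I. \<Sum>s\<in>A. f i s * w s)" by (rule sum.swap)
  finally show ?thesis .
qed

lemma EZ: "i < n \<Longrightarrow> (\<Sum>s\<in>sample_space n. Zr i s * model_prob n (p, \<lambda>_. 0) s) = 2 * p i"
  using mom1[of i n "\<lambda>a b. of_bool a + of_bool b" "(p, \<lambda>_. 0)"]
  by (simp add: Zr_def E1_def pair_pmf_def power2_eq_square algebra_simps)

lemma EW: "i < n \<Longrightarrow> (\<Sum>s\<in>sample_space n. Wr i s * model_prob n (p, \<lambda>_. 0) s) = 2 * p i * (1 - p i)"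
  using mom1[of i n "\<lambda>a b. (of_bool a - of_bool b)^2" "(p, \<lambda>_. 0)"]
  by (simp add: Wr_def E1_def pair_pmf_def power2_eq_square algebra_simps)

lemma EZZ: "i < n \<Longrightarrow> j < n \<Longrightarrow> (\<Sum>s\<in>sample_space n. Zr i s * Zr j s * model_prob n (p, \<lambda>_. 0) s)
   = 4 * p i * p j + (if i = j then 2 * p i - 2 * p i ^ 2 else 0)"
proof (cases "i = j")
  case True
  assume "i < n"
  then show ?thesis
  using True mom1[of i n "\<lambda>a b. (of_bool a + of_bool b) * (of_bool a + of_bool b)" "(p, \<lambda>_. 0)"]
  by (simp add: Zr_def E1_def pair_pmf_def power2_eq_square algebra_simps)
next
  case False
  assume "i < n" "j < n"
  then show ?thesis
  using False mom2[of i n j "\<lambda>a b. of_bool a + of_bool b" "\<lambda>a b. of_bool a + of_bool b" "(p, \<lambda>_. 0)"]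
  by (simp add: Zr_def E1_def pair_pmf_def power2_eq_square algebra_simps)
qed

lemma dens_XY_Zr: "dens_XY N s = (\<Sum>i<N. Zr i s) / (2 * real N)"
  unfolding dens_XY_def dens_X_def dens_Y_def Zr_def
  by (simp add: sum.distrib add_divide_distrib)

lemma T_form: "dens_XY N s * (1 - dens_XY N s) - 1 / (2 * real N) * (1 - 1 / (2 * real N)) * Delta N s
  = (\<Sum>i<N. Zr i s) / (2 * real N) - (\<Sum>i<N. \<Sum>j<N. Zr i s * Zr j s) / (4 * real N ^ 2)
    - 1 / (2 * real N) * (1 - 1 / (2 * real N)) * (\<Sum>i<N. Wr i s)"
proof -
  have "dens_XY N s * dens_XY N s = (\<Sum>i<N. \<Sum>j<N. Zr i s * Zr j s) / (4 * real N ^ 2)"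
    unfolding dens_XY_Zr by (simp add: sum_product power2_eq_square)
  then show ?thesis unfolding Delta_def Wr_def by (simp add: right_diff_distrib dens_XY_Zr)
qed

lemma unbiased_T:
  assumes N: "N \<ge> 1"
  shows "expect N (p, \<lambda>_. 0) (\<lambda>s. dens_XY N s * (1 - dens_XY N s)
                 - 1 / (2 * real N) * (1 - 1 / (2 * real N)) * Delta N s) = sigma2_p N p"
proof -
  let ?m = "model_prob N (p, \<lambda>_. 0)"
  let ?c = "1 / (2 * real N) * (1 - 1 / (2 * real N))"
  define A where "A = (\<Sum>i<N. p i)"
  define B where "B = (\<Sum>i<N. p i ^ 2)"
  have "expect N (p, \<lambda>_. 0) (\<lambda>s. dens_XY N s * (1 - dens_XY N s) - ?c * Delta N s)
    = (\<Sum>s\<in>sample_space N. ((\<Sum>i<N. Zr i s) * ?m s) / (2 * real N)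
        - ((\<Sum>i<N. \<Sum>j<N. Zr i s * Zr j s) * ?m s) / (4 * real N ^ 2)
        - ?c * ((\<Sum>i<N. Wr i s) * ?m s))"
    unfolding expect_def T_form by (intro sum.cong) (simp_all add: algebra_simps)
  also have "\<dots> = (\<Sum>s\<in>sample_space N. (\<Sum>i<N. Zr i s) * ?m s) / (2 * real N)
        - (\<Sum>s\<in>sample_space N. (\<Sum>i<N. \<Sum>j<N. Zr i s * Zr j s) * ?m s) / (4 * real N ^ 2)
        - ?c * (\<Sum>s\<in>sample_space N. (\<Sum>i<N. Wr i s) * ?m s)"
    by (simp add: sum_subtractf sum_divide_distrib sum_distrib_left)
  also have "\<dots> = (\<Sum>i<N. 2 * p i) / (2 * real N)
        - (\<Sum>i<N. \<Sum>j<N. 4 * p i * p j + (if i = j then 2 * p i - 2 * p i ^ 2 else 0)) / (4 * real N ^ 2)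
        - ?c * (\<Sum>i<N. 2 * p i * (1 - p i))"
  proof -
    have h1: "(\<Sum>s\<in>sample_space N. (\<Sum>i<N. Zr i s) * ?m s) = (\<Sum>i<N. 2 * p i)"
      unfolding lin_sum by (rule sum.cong) (simp_all add: EZ)
    have h3: "(\<Sum>s\<in>sample_space N. (\<Sum>i<N. Wr i s) * ?m s) = (\<Sum>i<N. 2 * p i * (1 - p i))"
      unfolding lin_sum by (rule sum.cong) (simp_all add: EW)
    have h2: "(\<Sum>s\<in>sample_space N. (\<Sum>i<N. \<Sum>j<N. Zr i s * Zr j s) * ?m s)
       = (\<Sum>i<N. \<Sum>j<N. 4 * p i * p j + (if i = j then 2 * p i - 2 * p i ^ 2 else 0))"
      unfolding lin_sum by (intro sum.cong refl) (simp add: EZZ)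
    show ?thesis unfolding h1 h2 h3 ..
  qed
  also have "\<dots> = 2 * A / (2 * real N) - (4 * A * A + (2 * A - 2 * B)) / (4 * real N ^ 2)
        - ?c * (2 * A - 2 * B)"
  proof -
    have g1: "(\<Sum>i<N. 2 * p i) = 2 * A" by (simp add: A_def sum_distrib_left)
    have g3: "(\<Sum>i<N. 2 * p i * (1 - p i)) = 2 * A - 2 * B"
      by (simp add: A_def B_def sum_distrib_left sum_subtractf algebra_simps power2_eq_square)
    have g2: "(\<Sum>i<N. \<Sum>j<N. 4 * p i * p j + (if i = j then 2 * p i - 2 * p i ^ 2 else 0))
       = 4 * A * A + (2 * A - 2 * B)"
    proof -
      have "(\<Sum>i<N. \<Sum>j<N. 4 * p i * p j + (if i = j then 2 * p i - 2 * p i ^ 2 else 0))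
         = (\<Sum>i<N. 4 * p i * A + (2 * p i - 2 * p i ^ 2))"
        by (intro sum.cong refl) (simp add: sum.distrib A_def sum_distrib_left)
      also have "\<dots> = 4 * A * A + (2 * A - 2 * B)"
        by (simp add: sum.distrib sum_subtractf A_def B_def sum_distrib_left sum_distrib_right algebra_simps)
      finally show ?thesis .
    qed
    show ?thesis unfolding g1 g2 g3 ..
  qed
  also have "\<dots> = sigma2_p N p"
  proof -
    have sq: "(\<Sum>i<N. (p i - c)^2) = B - 2 * c * A + real N * c^2" for c
    proof -
      have "(\<Sum>i<N. (p i - c)^2) = (\<Sum>i<N. p i ^ 2 - 2 * c * p i + c^2)"
        by (intro sum.cong refl) (simp add: power2_diff)
      also have "\<dots> = B - 2 * c * A + real N * c^2"
        by (simp add: sum.distrib sum_subtractf sum_distrib_left A_def B_def)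
      finally show ?thesis .
    qed
    show ?thesis using N unfolding sigma2_p_def mu_p_def A_def[symmetric] sq
      by (simp add: field_simps power2_eq_square)
  qed
  finally show ?thesis .
qed


lemma quad_zero:
  fixes A B C c e :: real
  assumes e: "e > 0" and h: "\<And>t. \<bar>t - c\<bar> < e \<Longrightarrow> (1-t)^2 * A + t*(1-t) * B + t^2 * C = 0"
  shows "A = 0 \<and> B = 0 \<and> C = 0"
proof -
  define \<alpha> where "\<alpha> = A"
  define \<beta> where "\<beta> = B - 2 * A"
  define \<gamma> where "\<gamma> = A - B + C"
  have f: "\<alpha> + \<beta> * t + \<gamma> * t^2 = 0" if "\<bar>t - c\<bar> < e" for t
    using h[OF that] unfolding \<alpha>_def \<beta>_def \<gamma>_def by (simp add: power2_eq_square algebra_simps)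
  have f1: "\<alpha> + \<beta> * c + \<gamma> * c^2 = 0" using f[of c] e by simp
  have f2: "\<alpha> + \<beta> * (c + e/2) + \<gamma> * (c + e/2)^2 = 0" using f[of "c + e/2"] e by simp
  have f3: "\<alpha> + \<beta> * (c - e/2) + \<gamma> * (c - e/2)^2 = 0" using f[of "c - e/2"] e by simp
  have d1: "(e/2) * (\<beta> + \<gamma> * (2*c + e/2)) = 0" using f1 f2 by (simp add: power2_eq_square algebra_simps)
  have d2: "(e/2) * (\<beta> + \<gamma> * (2*c - e/2)) = 0" using f1 f3 by (simp add: power2_eq_square algebra_simps)
  have g1: "\<beta> + \<gamma> * (2*c + e/2) = 0" using d1 e by simp
  have g2: "\<beta> + \<gamma> * (2*c - e/2) = 0" using d2 e by simp
  have "\<gamma> * e = (\<beta> + \<gamma> * (2*c + e/2)) - (\<beta> + \<gamma> * (2*c - e/2))" by (simp add: algebra_simps)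
  then have "\<gamma> * e = 0" using g1 g2 by simp
  then have gz: "\<gamma> = 0" using e by simp
  then have bz: "\<beta> = 0" using g1 by simp
  then have az: "\<alpha> = 0" using f1 gz by simp
  show ?thesis using az bz gz unfolding \<alpha>_def \<beta>_def \<gamma>_def by simp
qed

definition zz :: "((nat \<Rightarrow> bool) \<times> (nat \<Rightarrow> bool)) \<Rightarrow> nat \<Rightarrow> nat" where
  "zz s = (\<lambda>i. of_bool (fst s i) + of_bool (snd s i))"

lemma zz_upd:
  assumes "s \<in> sample_space n"
  shows "zz (upd n s a b) = w \<longleftrightarrow> zz s = w(n := 0) \<and> w n = of_bool a + of_bool b"
proof -
  have sn: "fst s n = False" "snd s n = False" using assms unfolding sample_space_def by auto
  show ?thesis
  proof
    assume H: "zz (upd n s a b) = w"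
    have Hi: "zz (upd n s a b) i = w i" for i using H by simp
    have "w n = of_bool a + of_bool b" using Hi[of n] unfolding zz_def upd_def by simp
    moreover have "zz s = w(n := 0)"
    proof
      fix i show "zz s i = (w(n := 0)) i"
        using Hi[of i] sn unfolding zz_def upd_def by (cases "i = n") auto
    qed
    ultimately show "zz s = w(n := 0) \<and> w n = of_bool a + of_bool b" by simp
  next
    assume a: "zz s = w(n := 0) \<and> w n = of_bool a + of_bool b"
    show "zz (upd n s a b) = w"
    proof
      fix i show "zz (upd n s a b) i = w i"
        using a fun_cong[of "zz s" "w(n:=0)" i] unfolding zz_def upd_def by (cases "i = n") auto
    qed
  qed
qed

lemma pp0: "pair_pmf t 0 False False = (1-t)^2" "pair_pmf t 0 True True = t^2"
  "pair_pmf t 0 False True = t * (1-t)" "pair_pmf t 0 True False = t * (1-t)"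
  by (simp_all add: pair_pmf_def)

lemma complete:
  assumes e: "e > 0"
    and h: "\<And>p. (\<forall>i<n. \<bar>p i - p0 i\<bar> < e) \<Longrightarrow> (\<Sum>s\<in>sample_space n. F s * model_prob n (p, \<lambda>_. 0) s) = 0"
  shows "(\<Sum>s\<in>{s\<in>sample_space n. zz s = w}. F s) = 0"
  using h
proof (induction n arbitrary: F w)
  case 0
  have "F (\<lambda>_. False, \<lambda>_. False) = 0"
    using "0.prems"[of p0] by (simp add: S_zero model_prob_def)
  then show ?case by (simp add: S_zero)
next
  case (Suc n)
  define G where "G a b s = F (upd n s a b)" for a b s
  define H where "H a b p = (\<Sum>s\<in>sample_space n. G a b s * model_prob n (p, \<lambda>_. 0) s)" for a b p
  have expand: "(\<Sum>s\<in>sample_space (Suc n). F s * model_prob (Suc n) (p, \<lambda>_. 0) s)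
     = (1 - p n)^2 * H False False p + p n * (1 - p n) * (H False True p + H True False p) + (p n)^2 * H True True p" for p
  proof -
    let ?m = "model_prob n (p, \<lambda>_. 0)"
    have r: "(1 - p n)^2 * H False False p + p n * (1 - p n) * (H False True p + H True False p) + (p n)^2 * H True True p
      = (\<Sum>s\<in>sample_space n. (1-p n)^2 * (G False False s * ?m s) + p n*(1-p n)*(G False True s * ?m s + G True False s * ?m s)
            + (p n)^2 * (G True True s * ?m s))"
      by (simp add: H_def sum.distrib sum_distrib_left distrib_left)
    show ?thesis unfolding r sum_S_Suc mp_Suc'
      by (rule sum.cong[OF refl]) (simp add: pp0 G_def algebra_simps)
  qed
  have Hcong: "H a b (p(n := t)) = H a b p" for a b p t
    unfolding H_def by (intro sum.cong refl arg_cong2[where f="(*)"] mp_cong) auto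
  have Hz: "H False False p = 0 \<and> H False True p + H True False p = 0 \<and> H True True p = 0"
    if p: "\<forall>i<n. \<bar>p i - p0 i\<bar> < e" for p
  proof -
    have "(1-t)^2 * H False False p + t*(1-t) * (H False True p + H True False p) + t^2 * H True True p = 0"
      if t: "\<bar>t - p0 n\<bar> < e" for t
    proof -
      have "\<forall>i<Suc n. \<bar>(p(n := t)) i - p0 i\<bar> < e" using p t by (auto simp: less_Suc_eq)
      from Suc.prems[OF this] show ?thesis unfolding expand Hcong by simp
    qed
    then show ?thesis using quad_zero[OF e] by blast
  qed
  have IH1: "(\<Sum>s\<in>{s\<in>sample_space n. zz s = w'}. G False False s) = 0" for w'
    by (rule Suc.IH) (use Hz in \<open>simp add: H_def\<close>)
  have IH2: "(\<Sum>s\<in>{s\<in>sample_space n. zz s = w'}. G False True s + G True False s) = 0" for w'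
    by (rule Suc.IH) (use Hz in \<open>simp add: H_def sum.distrib distrib_right\<close>)
  have IH3: "(\<Sum>s\<in>{s\<in>sample_space n. zz s = w'}. G True True s) = 0" for w'
    by (rule Suc.IH) (use Hz in \<open>simp add: H_def\<close>)
  define K where "K s = (if w n = 0 then G False False s else if w n = 1 then G False True s + G True False s
      else if w n = 2 then G True True s else 0)" for s
  have "(\<Sum>s\<in>{s\<in>sample_space (Suc n). zz s = w}. F s) = (\<Sum>s\<in>sample_space (Suc n). if zz s = w then F s else 0)"
    by (simp add: sum.inter_filter finite_S)
  also have "\<dots> = (\<Sum>s\<in>sample_space n. if zz s = w(n := 0) then K s else 0)"
    unfolding sum_S_Suc
  proof (rule sum.cong[OF refl])
    fix s assume s: "s \<in> sample_space n"
    show "(if zz (upd n s False False) = w then F (upd n s False False) else 0) +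
          (if zz (upd n s False True) = w then F (upd n s False True) else 0) +
          (if zz (upd n s True False) = w then F (upd n s True False) else 0) +
          (if zz (upd n s True True) = w then F (upd n s True True) else 0) =
          (if zz s = w(n := 0) then K s else 0)"
      unfolding zz_upd[OF s] K_def G_def by auto
  qed
  also have "\<dots> = (\<Sum>s\<in>{s\<in>sample_space n. zz s = w(n := 0)}. K s)"
    by (simp add: sum.inter_filter finite_S)
  also have "\<dots> = 0"
    unfolding K_def by (cases "w n = 0"; cases "w n = 1"; cases "w n = 2") (simp_all add: IH1 IH2 IH3)
  finally show ?case .
qed



definition qf :: "real \<Rightarrow> nat \<Rightarrow> real" where
  "qf t k = (if k = 0 then (1-t)^2 else if k = 1 then t * (1-t) else t^2)"

lemma mp_zz: "model_prob N (p, \<lambda>_. 0) s = (\<Prod>i<N. qf (p i) (zz s i))"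
  unfolding model_prob_def zz_def
  by (intro prod.cong refl) (auto simp: qf_def pair_pmf_def)

definition fT :: "nat \<Rightarrow> (nat \<Rightarrow> nat) \<Rightarrow> real" where
  "fT N w = (\<Sum>i<N. real (w i)) / (2 * real N) * (1 - (\<Sum>i<N. real (w i)) / (2 * real N))
     - 1 / (2 * real N) * (1 - 1 / (2 * real N)) * (\<Sum>i<N. of_bool (w i = 1))"

lemma T_zz: "dens_XY N s * (1 - dens_XY N s) - 1 / (2 * real N) * (1 - 1 / (2 * real N)) * Delta N s
   = fT N (zz s)"
proof -
  have "Zr i s = real (zz s i)" for i unfolding Zr_def zz_def by simp
  moreover have "(of_bool (fst s i) - of_bool (snd s i))^2 = (of_bool (zz s i = 1) :: real)" for i
    unfolding zz_def by (cases "fst s i"; cases "snd s i") auto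
  ultimately show ?thesis unfolding fT_def dens_XY_Zr Delta_def by simp
qed

lemma pp_nonneg: "0 \<le> t \<Longrightarrow> t \<le> 1 \<Longrightarrow> 0 \<le> pair_pmf t 0 a b"
  unfolding pair_pmf_def by auto

theorem corollary2:
  fixes N :: nat and \<Theta> :: "((nat \<Rightarrow> real) \<times> (nat \<Rightarrow> real)) set"
  assumes "N \<ge> 1"
    and "\<Theta> \<subseteq> param_space_R N"
    and "\<Theta> \<subseteq> param_space_Ro N"
    and "nondegenerate N \<Theta>"
  shows "UMVU N \<Theta>
           (\<lambda>s. dens_XY N s * (1 - dens_XY N s)
                 - 1 / (2 * real N) * (1 - 1 / (2 * real N)) * Delta N s)
           (\<lambda>\<theta>. sigma2_p N (fst \<theta>))"
proof -
  let ?T = "\<lambda>s. dens_XY N s * (1 - dens_XY N s)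
                 - 1 / (2 * real N) * (1 - 1 / (2 * real N)) * Delta N s"
  let ?g = "\<lambda>\<theta>. sigma2_p N (fst \<theta>)"
  have th0: "\<theta> = (fst \<theta>, \<lambda>_. 0)" if "\<theta> \<in> \<Theta>" for \<theta>
    using that assms(3) unfolding param_space_Ro_def by (cases \<theta>) (auto simp: fun_eq_iff)
  have unb: "unbiased N \<Theta> ?T ?g"
    unfolding unbiased_def
  proof
    fix \<theta> assume "\<theta> \<in> \<Theta>"
    then have e: "\<theta> = (fst \<theta>, \<lambda>_. 0)" by (rule th0)
    show "expect N \<theta> ?T = ?g \<theta>" by (subst e, subst e) (simp only: unbiased_T[OF assms(1)] fst_conv)
  qed
  have minvar: "variance_of N \<theta> ?T \<le> variance_of N \<theta> T'"
    if T': "unbiased N \<Theta> T' ?g" and th: "\<theta> \<in> \<Theta>" for T' \<theta>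
  proof -
    define U where "U s = T' s - ?T s" for s
    have U0: "(\<Sum>s\<in>sample_space N. U s * model_prob N \<theta>' s) = 0" if "\<theta>' \<in> \<Theta>" for \<theta>'
    proof -
      have "expect N \<theta>' T' = expect N \<theta>' ?T" using T' unb that unfolding unbiased_def by simp
      then show ?thesis unfolding U_def expect_def by (simp add: left_diff_distrib sum_subtractf)
    qed
    obtain p0 e where pe: "e > 0" and box: "\<And>q. (q, (\<lambda>_. 0)) \<in> param_space_Ro N \<Longrightarrow>
        (\<forall>i<N. \<bar>q i - p0 i\<bar> < e) \<Longrightarrow> (q, (\<lambda>_. 0)) \<in> \<Theta>"
      using assms(4) unfolding nondegenerate_def by blast
    have hyp: "(\<Sum>s\<in>sample_space N. U s * model_prob N (q, \<lambda>_. 0) s) = 0"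
      if q: "\<forall>i<N. \<bar>q i - p0 i\<bar> < e" for q
    proof -
      define q' where "q' i = (if i < N then q i else 0)" for i
      have "(q', (\<lambda>_. 0)) \<in> \<Theta>"
        by (rule box) (use q in \<open>auto simp: q'_def param_space_Ro_def\<close>)
      then have "(\<Sum>s\<in>sample_space N. U s * model_prob N (q', \<lambda>_. 0) s) = 0" by (rule U0)
      moreover have "model_prob N (q', \<lambda>_. 0) s = model_prob N (q, \<lambda>_. 0) s" for s
        by (rule mp_cong) (simp add: q'_def)
      ultimately show ?thesis by simp
    qed
    have fib: "(\<Sum>s\<in>{s\<in>sample_space N. zz s = w}. U s) = 0" for w
      by (rule complete[OF pe hyp])
    define p where "p = fst \<theta>"
    have thp: "\<theta> = (p, \<lambda>_. 0)" using th0[OF th] unfolding p_def .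
    let ?m = "model_prob N \<theta>"
    define \<Phi> where "\<Phi> w = fT N w * (\<Prod>i<N. qf (p i) (w i))" for w
    have TU: "(\<Sum>s\<in>sample_space N. ?T s * U s * ?m s) = 0"
    proof -
      have "(\<Sum>s\<in>sample_space N. ?T s * U s * ?m s) = (\<Sum>s\<in>sample_space N. \<Phi> (zz s) * U s)"
        unfolding T_zz by (rule sum.cong[OF refl]) (simp add: thp mp_zz \<Phi>_def)
      also have "\<dots> = (\<Sum>w\<in>zz ` sample_space N. \<Sum>s\<in>{s\<in>sample_space N. zz s = w}. \<Phi> (zz s) * U s)"
        by (rule sum.image_gen[OF finite_S])
      also have "\<dots> = (\<Sum>w\<in>zz ` sample_space N. \<Phi> w * (\<Sum>s\<in>{s\<in>sample_space N. zz s = w}. U s))"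
        by (rule sum.cong[OF refl]) (simp add: sum_distrib_left)
      also have "\<dots> = 0" by (simp add: fib)
      finally show ?thesis .
    qed
    have mnn: "0 \<le> ?m s" for s
    proof -
      have "\<theta> \<in> param_space_R N" using th assms(2) by blast
      then have "\<forall>i<N. 0 \<le> p i \<and> p i \<le> 1" unfolding param_space_R_def thp by auto
      then show ?thesis unfolding thp model_prob_def by (auto intro!: prod_nonneg pp_nonneg)
    qed
    have ET': "expect N \<theta> T' = ?g \<theta>" and ET: "expect N \<theta> ?T = ?g \<theta>"
      using T' unb th unfolding unbiased_def by auto
    have Um: "(\<Sum>s\<in>sample_space N. U s * ?m s) = 0" by (rule U0[OF th])
    have "variance_of N \<theta> T' = (\<Sum>s\<in>sample_space N. (?T s + U s - ?g \<theta>)^2 * ?m s)"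
      unfolding variance_of_def expect_def[of N \<theta> "\<lambda>s. (T' s - _)^2"] ET' U_def by simp
    also have "\<dots> = (\<Sum>s\<in>sample_space N. (?T s - ?g \<theta>)^2 * ?m s)
        + 2 * ((\<Sum>s\<in>sample_space N. ?T s * U s * ?m s) - ?g \<theta> * (\<Sum>s\<in>sample_space N. U s * ?m s))
        + (\<Sum>s\<in>sample_space N. (U s)^2 * ?m s)"
    proof -
      have pw: "(?T s + U s - ?g \<theta>)^2 * ?m s = (?T s - ?g \<theta>)^2 * ?m s
          + 2 * (?T s * U s * ?m s - ?g \<theta> * (U s * ?m s)) + (U s)^2 * ?m s" for s
        by (simp add: power2_eq_square algebra_simps)
      show ?thesis unfolding pw
        by (simp only: sum.distrib sum_subtractf sum_distrib_left[symmetric])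
    qed
    also have "\<dots> = variance_of N \<theta> ?T + (\<Sum>s\<in>sample_space N. (U s)^2 * ?m s)"
      unfolding TU Um variance_of_def expect_def[of N \<theta> "\<lambda>s. (?T s - _)^2"] ET by simp
    also have "\<dots> \<ge> variance_of N \<theta> ?T"
      using mnn by (simp add: sum_nonneg)
    finally show ?thesis .
  qed
  show ?thesis unfolding UMVU_def using unb minvar by blast
qed

end
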